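(* Let $\mathcal M$ be a finite polyptych lattice over $F$ with canonical semialgebra $S_{\mathcal M}$. Restriction to $\mathcal M\subseteq S_{\mathcal M}$ gives a bijection between the set of $F_{\ge0}$-semialgebra morphisms $\tilde p:(S_{\mathcal M},\oplus,\star)\to(F\cup\{\infty\},\min,+)$ that take finite values on $S_{\mathcal M}\setminus\{\infty\}$, and the set $\mathrm{Sp}(\mathcal M)$ of points of $\mathcal M$. The inverse sends $p$ to $\tilde p(\bigoplus_{m\in S}m)=\min_{m\in S}p(m)$, $\tilde p(\infty)=\infty$.
   Context: Fix a subring $F$ with $\mathbb Z\subseteq F\subseteq\mathbb R$. A polyptych lattice of rank $r$ over $F$ is a collection $\{M_\alpha\}_{\alpha\in I}$ of free $F$-modules of rank $r$ with piecewise $F$-linear maps (continuous and $F$-linear on each cone of some complete $F$-rational fan) $\mu_{\alpha,\beta}:M_\alpha\to M_\beta$ with $\mu_{\alpha,\alpha}=\mathrm{id}$, $\mu_{\alpha,\beta}=\mu_{\beta,\alpha}^{-1}$, $\mu_{\beta,\gamma}\circ\mu_{\alpha,\beta}=\mu_{\alpha,\gamma}$; finite if $I$ is finite. Elements are classes of $\bigsqcup M_\alpha$ under $m_\alpha\sim\mu_{\alpha,\beta}(m_\alpha)$; $\pi_\alpha$ the chart maps; $\mathcal M_{\mathbb R}$ has charts $M_\alpha\otimes\mathbb R$; $m+_\alpha m':=\pi_\alpha^{-1}(\pi_\alpha(m)+\pi_\alpha(m'))$; $\lambda m:=\pi_\alpha^{-1}(\lambda\pi_\alpha(m))$ ($\lambda\ge0$).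 A point is $p:\mathcal M\to F$ with $p(m)+p(m')=\min_\alpha p(m+_\alpha m')$ and $p(\lambda m)=\lambda p(m)$ ($\lambda\in F_{\ge0}$); $\mathrm{Sp}(\mathcal M)$ is the set of points; points extend continuously to $\mathcal M_{\mathbb R}$. PL half-space: $\mathcal H_{p,a}=\{m\in\mathcal M_{\mathbb R}:p(m)\ge a\}$; $\mathrm{p\text{-}conv}_F(S)=\bigcap\{\mathcal H_{p,a}:p\in\mathrm{Sp}(\mathcal M),a\in F,S\subseteq\mathcal H_{p,a}\}$. The canonical semialgebra $S_{\mathcal M}$: the free commutative idempotent semigroup (operation $\oplus$) on elements of $\mathcal M$ modulo $\bigoplus_{m\in S}m=\bigoplus_{m\in S'}m$ whenever $S,S'\subseteq\mathcal M$ are finite with $\mathrm{p\text{-}conv}_F(S)=\mathrm{p\text{-}conv}_F(S')$, with an adjoined additive identity $\infty$; product $m\star m':=\bigoplus_{\alpha\in I}(m+_\alpha m')$, $m\star\infty=\infty$, extended distributively; $F_{\ge0}$-action $\lambda\cdot\bigoplus_{m\in S}m=\bigoplus_{m\in S}\lambda m$, $\lambda\cdot\infty=\infty$ for $\lambda>0$, $0\cdot\infty=0_{\mathcal M}$ (the element whose chart representatives are all $0$, which is the $\star$-identity). $(F\cup\{\infty\},\min,+)$ carries the usual $F_{\ge0}$-scaling. An $F_{\ge0}$-semialgebra morphism preserves $\oplus$ (to $\min$), $\star$ (to $+$), identities and the $F_{\ge0}$-action. *)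

theory Defs
  imports "HOL-Analysis.Analysis"
begin

text \<open>Chart spaces M_alpha tensor R are modelled as real^'n, the lattice M_alpha as the
  F-points of real^'n.  An element of M (or M_R) is the family of its chart
  representatives, indexed by I (value 0 outside I).\<close>

definition subring_of_reals :: "real set \<Rightarrow> bool" where
  "subring_of_reals F \<longleftrightarrow> \<int> \<subseteq> F \<and> (\<forall>x\<in>F. \<forall>y\<in>F. x + y \<in> F \<and> x * y \<in> F \<and> - x \<in> F)"

definition Fpts :: "real set \<Rightarrow> (real^'n) set" where
  "Fpts F = {v. \<forall>i. v $ i \<in> F}"

definition F_rational_cone :: "real set \<Rightarrow> (real^'n) set \<Rightarrow> bool" where
  "F_rational_cone F C \<longleftrightarrow> (\<exists>S. finite S \<and> S \<subseteq> Fpts F \<and> C = convex_cone hull S)"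

definition complete_F_fan :: "real set \<Rightarrow> (real^'n) set set \<Rightarrow> bool" where
  "complete_F_fan F \<Sigma> \<longleftrightarrow> finite \<Sigma>
     \<and> (\<forall>C\<in>\<Sigma>. F_rational_cone F C \<and> (\<forall>x\<in>C. - x \<in> C \<longrightarrow> x = 0))
     \<and> (\<forall>C\<in>\<Sigma>. \<forall>D. D \<noteq> {} \<and> D face_of C \<longrightarrow> D \<in> \<Sigma>)
     \<and> (\<forall>C\<in>\<Sigma>. \<forall>D\<in>\<Sigma>. (C \<inter> D) face_of C \<and> (C \<inter> D) face_of D)
     \<and> \<Union>\<Sigma> = UNIV"

definition piecewise_F_linear :: "real set \<Rightarrow> (real^'n \<Rightarrow> real^'n) \<Rightarrow> bool" where
  "piecewise_F_linear F f \<longleftrightarrow> continuous_on UNIV f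
     \<and> (\<exists>\<Sigma>. complete_F_fan F \<Sigma> \<and> (\<forall>C\<in>\<Sigma>. \<exists>L. linear L \<and> (\<forall>x\<in>C. f x = L x)))
     \<and> f ` Fpts F \<subseteq> Fpts F"

definition polyptych_lattice ::
  "real set \<Rightarrow> 'i set \<Rightarrow> ('i \<Rightarrow> 'i \<Rightarrow> real^'n \<Rightarrow> real^'n) \<Rightarrow> bool" where
  "polyptych_lattice F I mu \<longleftrightarrow> I \<noteq> {}
     \<and> (\<forall>a\<in>I. \<forall>b\<in>I. piecewise_F_linear F (mu a b))
     \<and> (\<forall>a\<in>I. mu a a = id)
     \<and> (\<forall>a\<in>I. \<forall>b\<in>I. mu a b \<circ> mu b a = id)
     \<and> (\<forall>a\<in>I. \<forall>b\<in>I. \<forall>c\<in>I. mu b c \<circ> mu a b = mu a c)"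

definition MR :: "'i set \<Rightarrow> ('i \<Rightarrow> 'i \<Rightarrow> real^'n \<Rightarrow> real^'n) \<Rightarrow> ('i \<Rightarrow> real^'n) set" where
  "MR I mu = {m. (\<forall>a\<in>I. \<forall>b\<in>I. m b = mu a b (m a)) \<and> (\<forall>a. a \<notin> I \<longrightarrow> m a = 0)}"

definition Mel :: "real set \<Rightarrow> 'i set \<Rightarrow> ('i \<Rightarrow> 'i \<Rightarrow> real^'n \<Rightarrow> real^'n) \<Rightarrow> ('i \<Rightarrow> real^'n) set" where
  "Mel F I mu = {m \<in> MR I mu. \<forall>a\<in>I. m a \<in> Fpts F}"

definition lift :: "'i set \<Rightarrow> ('i \<Rightarrow> 'i \<Rightarrow> real^'n \<Rightarrow> real^'n) \<Rightarrow> 'i \<Rightarrow> real^'n \<Rightarrow> ('i \<Rightarrow> real^'n)" where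
  "lift I mu a v = (\<lambda>b. if b \<in> I then mu a b v else 0)"

definition padd :: "'i set \<Rightarrow> ('i \<Rightarrow> 'i \<Rightarrow> real^'n \<Rightarrow> real^'n) \<Rightarrow> 'i \<Rightarrow> ('i \<Rightarrow> real^'n) \<Rightarrow> ('i \<Rightarrow> real^'n) \<Rightarrow> ('i \<Rightarrow> real^'n)" where
  "padd I mu a m m' = lift I mu a (m a + m' a)"

text \<open>lambda m (scaling in a chart; by positive homogeneity of the PL maps this is
  chart-independent, hence scaling every chart representative)\<close>
definition psmul :: "real \<Rightarrow> ('i \<Rightarrow> real^'n) \<Rightarrow> ('i \<Rightarrow> real^'n)" where
  "psmul c m = (\<lambda>b. c *\<^sub>R m b)"

definition zeroM :: "'i set \<Rightarrow> ('i \<Rightarrow> real^'n)" where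
  "zeroM I = (\<lambda>b. 0)"

definition Sp :: "real set \<Rightarrow> 'i set \<Rightarrow> ('i \<Rightarrow> 'i \<Rightarrow> real^'n \<Rightarrow> real^'n) \<Rightarrow> (('i \<Rightarrow> real^'n) \<Rightarrow> real) set" where
  "Sp F I mu = {p. p \<in> extensional (Mel F I mu)
     \<and> (\<forall>m\<in>Mel F I mu. p m \<in> F)
     \<and> (\<forall>m\<in>Mel F I mu. \<forall>m'\<in>Mel F I mu. p m + p m' = Min ((\<lambda>a. p (padd I mu a m m')) ` I))
     \<and> (\<forall>c\<in>F. c \<ge> 0 \<longrightarrow> (\<forall>m\<in>Mel F I mu. p (psmul c m) = c * p m))}"

text \<open>The continuous extension of a point to M_R (unique among positively homogeneous
  functions continuous in every chart).\<close>
definition pext :: "real set \<Rightarrow> 'i set \<Rightarrow> ('i \<Rightarrow> 'i \<Rightarrow> real^'n \<Rightarrow> real^'n) \<Rightarrow> (('i \<Rightarrow> real^'n) \<Rightarrow> real) \<Rightarrow> (('i \<Rightarrow> real^'n) \<Rightarrow> real)" where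
  "pext F I mu p = (THE q. q \<in> extensional (MR I mu)
     \<and> (\<forall>m\<in>Mel F I mu. q m = p m)
     \<and> (\<forall>a\<in>I. continuous_on UNIV (\<lambda>v. q (lift I mu a v)))
     \<and> (\<forall>c\<ge>0. \<forall>m\<in>MR I mu. q (psmul c m) = c * q m))"

definition PL_halfspace :: "real set \<Rightarrow> 'i set \<Rightarrow> ('i \<Rightarrow> 'i \<Rightarrow> real^'n \<Rightarrow> real^'n) \<Rightarrow> (('i \<Rightarrow> real^'n) \<Rightarrow> real) \<Rightarrow> real \<Rightarrow> ('i \<Rightarrow> real^'n) set" where
  "PL_halfspace F I mu p a = {m \<in> MR I mu. pext F I mu p m \<ge> a}"

definition pconv :: "real set \<Rightarrow> 'i set \<Rightarrow> ('i \<Rightarrow> 'i \<Rightarrow> real^'n \<Rightarrow> real^'n) \<Rightarrow> ('i \<Rightarrow> real^'n) set \<Rightarrow> ('i \<Rightarrow> real^'n) set" where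
  "pconv F I mu S = MR I mu \<inter> \<Inter>{PL_halfspace F I mu p a | p a.
      p \<in> Sp F I mu \<and> a \<in> F \<and> S \<subseteq> PL_halfspace F I mu p a}"

text \<open>Canonical semialgebra: nonempty finite subsets of M (= elements of the free commutative
  idempotent semigroup) modulo equality of p-convex hulls; None is the adjoined infinity.\<close>
definition FinM :: "real set \<Rightarrow> 'i set \<Rightarrow> ('i \<Rightarrow> 'i \<Rightarrow> real^'n \<Rightarrow> real^'n) \<Rightarrow> ('i \<Rightarrow> real^'n) set set" where
  "FinM F I mu = {S. finite S \<and> S \<noteq> {} \<and> S \<subseteq> Mel F I mu}"

definition SMrel :: "real set \<Rightarrow> 'i set \<Rightarrow> ('i \<Rightarrow> 'i \<Rightarrow> real^'n \<Rightarrow> real^'n) \<Rightarrow> (('i \<Rightarrow> real^'n) set \<times> ('i \<Rightarrow> real^'n) set) set" where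
  "SMrel F I mu = {(S, S'). S \<in> FinM F I mu \<and> S' \<in> FinM F I mu \<and> pconv F I mu S = pconv F I mu S'}"

definition SM :: "real set \<Rightarrow> 'i set \<Rightarrow> ('i \<Rightarrow> 'i \<Rightarrow> real^'n \<Rightarrow> real^'n) \<Rightarrow> ('i \<Rightarrow> real^'n) set set option set" where
  "SM F I mu = insert None (Some ` (FinM F I mu // SMrel F I mu))"

text \<open>class of the element (oplus over m in S) m\<close>
definition smcls :: "real set \<Rightarrow> 'i set \<Rightarrow> ('i \<Rightarrow> 'i \<Rightarrow> real^'n \<Rightarrow> real^'n) \<Rightarrow> ('i \<Rightarrow> real^'n) set \<Rightarrow> ('i \<Rightarrow> real^'n) set set option" where
  "smcls F I mu S = Some (SMrel F I mu `` {S})"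

definition sm_oplus :: "real set \<Rightarrow> 'i set \<Rightarrow> ('i \<Rightarrow> 'i \<Rightarrow> real^'n \<Rightarrow> real^'n) \<Rightarrow> ('i \<Rightarrow> real^'n) set set option \<Rightarrow> ('i \<Rightarrow> real^'n) set set option \<Rightarrow> ('i \<Rightarrow> real^'n) set set option" where
  "sm_oplus F I mu x y = (case x of None \<Rightarrow> y | Some X \<Rightarrow> (case y of None \<Rightarrow> x
      | Some Y \<Rightarrow> Some (SMrel F I mu `` {S \<union> T | S T. S \<in> X \<and> T \<in> Y})))"

definition sm_star :: "real set \<Rightarrow> 'i set \<Rightarrow> ('i \<Rightarrow> 'i \<Rightarrow> real^'n \<Rightarrow> real^'n) \<Rightarrow> ('i \<Rightarrow> real^'n) set set option \<Rightarrow> ('i \<Rightarrow> real^'n) set set option \<Rightarrow> ('i \<Rightarrow> real^'n) set set option" where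
  "sm_star F I mu x y = (case x of None \<Rightarrow> None | Some X \<Rightarrow> (case y of None \<Rightarrow> None
      | Some Y \<Rightarrow> Some (SMrel F I mu ``
           {{padd I mu a s t | s t a. s \<in> S \<and> t \<in> T \<and> a \<in> I} | S T. S \<in> X \<and> T \<in> Y})))"

definition sm_scale :: "real set \<Rightarrow> 'i set \<Rightarrow> ('i \<Rightarrow> 'i \<Rightarrow> real^'n \<Rightarrow> real^'n) \<Rightarrow> real \<Rightarrow> ('i \<Rightarrow> real^'n) set set option \<Rightarrow> ('i \<Rightarrow> real^'n) set set option" where
  "sm_scale F I mu c x = (case x of
      None \<Rightarrow> (if c = 0 then smcls F I mu {zeroM I} else None)
    | Some X \<Rightarrow> Some (SMrel F I mu `` {psmul c ` S | S. S \<in> X}))"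

text \<open>F_{>=0}-scaling on F union {infinity} (0 * infinity = 0).\<close>
definition tscale :: "real \<Rightarrow> ereal \<Rightarrow> ereal" where
  "tscale c x = (if c = 0 then 0 else ereal c * x)"

definition SMor :: "real set \<Rightarrow> 'i set \<Rightarrow> ('i \<Rightarrow> 'i \<Rightarrow> real^'n \<Rightarrow> real^'n) \<Rightarrow> (('i \<Rightarrow> real^'n) set set option \<Rightarrow> ereal) set" where
  "SMor F I mu = {pt. pt \<in> extensional (SM F I mu)
     \<and> (\<forall>x\<in>SM F I mu. pt x \<in> ereal ` F \<union> {\<infinity>})
     \<and> (\<forall>x\<in>SM F I mu. \<forall>y\<in>SM F I mu.
           pt (sm_oplus F I mu x y) = min (pt x) (pt y)
         \<and> pt (sm_star F I mu x y) = pt x + pt y)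
     \<and> pt None = \<infinity>
     \<and> pt (smcls F I mu {zeroM I}) = 0
     \<and> (\<forall>c\<in>F. c \<ge> 0 \<longrightarrow> (\<forall>x\<in>SM F I mu. pt (sm_scale F I mu c x) = tscale c (pt x)))
     \<and> (\<forall>x\<in>SM F I mu - {None}. pt x \<noteq> \<infinity>)}"

definition restrM :: "real set \<Rightarrow> 'i set \<Rightarrow> ('i \<Rightarrow> 'i \<Rightarrow> real^'n \<Rightarrow> real^'n) \<Rightarrow> (('i \<Rightarrow> real^'n) set set option \<Rightarrow> ereal) \<Rightarrow> (('i \<Rightarrow> real^'n) \<Rightarrow> real)" where
  "restrM F I mu pt = restrict (\<lambda>m. real_of_ereal (pt (smcls F I mu {m}))) (Mel F I mu)"

end

theory Submission
  imports Defs
begin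



locale PLat =
  fixes F :: "real set" and I :: "'i set" and mu :: "'i \<Rightarrow> 'i \<Rightarrow> real^'n \<Rightarrow> real^'n"
  assumes sub: "subring_of_reals F" and pl: "polyptych_lattice F I mu" and finI: "finite I"
begin

lemma Ints_F: "\<int> \<subseteq> F" using sub by (simp add: subring_of_reals_def)
lemma F_add: "x \<in> F \<Longrightarrow> y \<in> F \<Longrightarrow> x + y \<in> F" using sub by (simp add: subring_of_reals_def)
lemma F_mult: "x \<in> F \<Longrightarrow> y \<in> F \<Longrightarrow> x * y \<in> F" using sub by (simp add: subring_of_reals_def)
lemma F_neg: "x \<in> F \<Longrightarrow> - x \<in> F" using sub by (simp add: subring_of_reals_def)
lemma F_int: "real_of_int k \<in> F" using Ints_F by (auto simp: Ints_def)
lemma F_nat: "real k \<in> F" using F_int[of "int k"] by simp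
lemma F_0: "0 \<in> F" using F_nat[of 0] by simp

lemma I_ne: "I \<noteq> {}" using pl by (simp add: polyptych_lattice_def)
lemma mu_pwl: "a \<in> I \<Longrightarrow> b \<in> I \<Longrightarrow> piecewise_F_linear F (mu a b)"
  using pl by (simp add: polyptych_lattice_def)
lemma mu_id: "a \<in> I \<Longrightarrow> mu a a = id" using pl by (simp add: polyptych_lattice_def)
lemma mu_comp: "a \<in> I \<Longrightarrow> b \<in> I \<Longrightarrow> c \<in> I \<Longrightarrow> mu b c (mu a b v) = mu a c v"
  using pl unfolding polyptych_lattice_def by (metis comp_apply)

lemma mu_cont: "a \<in> I \<Longrightarrow> b \<in> I \<Longrightarrow> continuous_on UNIV (mu a b)"
  using mu_pwl by (simp add: piecewise_F_linear_def)
lemma mu_Fpts: "a \<in> I \<Longrightarrow> b \<in> I \<Longrightarrow> v \<in> Fpts F \<Longrightarrow> mu a b v \<in> Fpts F"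
  using mu_pwl unfolding piecewise_F_linear_def by blast

lemma mu_hom: assumes "a \<in> I" "b \<in> I" "c \<ge> 0" shows "mu a b (c *\<^sub>R v) = c *\<^sub>R mu a b v"
proof -
  obtain \<Sigma> where S: "complete_F_fan F \<Sigma>" "\<forall>C\<in>\<Sigma>. \<exists>L. linear L \<and> (\<forall>x\<in>C. mu a b x = L x)"
    using mu_pwl[OF assms(1,2)] by (auto simp: piecewise_F_linear_def)
  then obtain C where C: "C \<in> \<Sigma>" "v \<in> C" unfolding complete_F_fan_def by (metis UNIV_I UnionE)
  then obtain L where L: "linear L" "\<forall>x\<in>C. mu a b x = L x" using S by blast
  have "F_rational_cone F C" using S C by (auto simp: complete_F_fan_def)
  then obtain T where "C = convex_cone hull T" by (auto simp: F_rational_cone_def)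
  then have "conic C" using convex_cone_convex_cone_hull[of T] unfolding convex_cone_def by simp
  then have "c *\<^sub>R v \<in> C" using C assms(3) by (simp add: conic_def)
  then show ?thesis using L C by (simp add: linear_scale)
qed

lemma mu_0: "a \<in> I \<Longrightarrow> b \<in> I \<Longrightarrow> mu a b 0 = 0"
  using mu_hom[of a b 0 0] by simp

lemma Fpts_add: "x \<in> Fpts F \<Longrightarrow> y \<in> Fpts F \<Longrightarrow> x + y \<in> Fpts F"
  by (simp add: Fpts_def F_add)
lemma Fpts_scale: "c \<in> F \<Longrightarrow> x \<in> Fpts F \<Longrightarrow> c *\<^sub>R x \<in> Fpts F"
  by (simp add: Fpts_def F_mult)
lemma Fpts_neg: "x \<in> Fpts F \<Longrightarrow> - x \<in> Fpts F"
  by (simp add: Fpts_def F_neg)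
lemma Fpts_int: "(\<chi> i. real_of_int (k i)) \<in> Fpts F"
  by (simp add: Fpts_def F_int)
lemma Fpts_0: "0 \<in> Fpts F" by (simp add: Fpts_def F_0)
lemma Fpts_axis: "axis i 1 \<in> Fpts F"
  by (simp add: Fpts_def axis_def F_0 F_nat[of 1, simplified])

lemma lift_MR: "a \<in> I \<Longrightarrow> lift I mu a v \<in> MR I mu"
  by (simp add: MR_def lift_def mu_comp)
lemma lift_Mel: "a \<in> I \<Longrightarrow> v \<in> Fpts F \<Longrightarrow> lift I mu a v \<in> Mel F I mu"
  by (simp add: Mel_def lift_MR) (simp add: lift_def mu_Fpts)
lemma MR_D: "m \<in> MR I mu \<Longrightarrow> a \<in> I \<Longrightarrow> b \<in> I \<Longrightarrow> m b = mu a b (m a)"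
  unfolding MR_def by blast
lemma MR_out: "m \<in> MR I mu \<Longrightarrow> a \<notin> I \<Longrightarrow> m a = 0"
  unfolding MR_def by blast
lemma lift_self: assumes "m \<in> MR I mu" "a \<in> I" shows "lift I mu a (m a) = m"
proof
  fix b show "lift I mu a (m a) b = m b"
    using MR_D[OF assms, of b] MR_out[OF assms(1), of b] unfolding lift_def by (cases "b \<in> I") simp_all
qed
lemma lift_at: "a \<in> I \<Longrightarrow> b \<in> I \<Longrightarrow> lift I mu a v b = mu a b v"
  by (simp add: lift_def)
lemma lift_at_self: "a \<in> I \<Longrightarrow> lift I mu a v a = v"
  by (simp add: lift_def mu_id)
lemma psmul_lift: "a \<in> I \<Longrightarrow> c \<ge> 0 \<Longrightarrow> psmul c (lift I mu a v) = lift I mu a (c *\<^sub>R v)"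
  by (auto simp: psmul_def lift_def mu_hom)
lemma padd_lift: "a \<in> I \<Longrightarrow> padd I mu a (lift I mu a x) (lift I mu a y) = lift I mu a (x + y)"
  by (simp add: padd_def lift_at_self)
lemma psmul_MR: assumes "m \<in> MR I mu" "c \<ge> 0" shows "psmul c m \<in> MR I mu"
proof -
  have "\<forall>a\<in>I. \<forall>b\<in>I. c *\<^sub>R m b = mu a b (c *\<^sub>R m a)"
  proof (intro ballI)
    fix a b assume a: "a \<in> I" and b: "b \<in> I"
    show "c *\<^sub>R m b = mu a b (c *\<^sub>R m a)" by (simp only: MR_D[OF assms(1) a b] mu_hom[OF a b assms(2)])
  qed
  moreover have "\<forall>a. a \<notin> I \<longrightarrow> c *\<^sub>R m a = 0" using MR_out[OF assms(1)] by simp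
  ultimately show ?thesis unfolding MR_def psmul_def mem_Collect_eq by blast
qed

lemma psmul_Mel: assumes "m \<in> Mel F I mu" "c \<ge> 0" "c \<in> F" shows "psmul c m \<in> Mel F I mu"
  using assms psmul_MR[OF _ assms(2)] unfolding Mel_def psmul_def by (simp add: Fpts_scale)
lemma padd_Mel: assumes "m \<in> Mel F I mu" "m' \<in> Mel F I mu" "a \<in> I" shows "padd I mu a m m' \<in> Mel F I mu"
proof -
  have "m a + m' a \<in> Fpts F" using assms by (auto simp: Mel_def intro!: Fpts_add)
  then show ?thesis using assms(3) by (simp add: padd_def lift_Mel)
qed
lemma zeroM_Mel: "zeroM I \<in> Mel F I mu"
  by (auto simp: Mel_def MR_def zeroM_def mu_0 Fpts_0)
lemma psmul_0: "psmul 0 m = zeroM I" by (simp add: psmul_def zeroM_def)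

end



definition dl1 :: "real^'n \<Rightarrow> real^'n \<Rightarrow> real" where
  "dl1 x y = (\<Sum>i\<in>UNIV. \<bar>x$i - y$i\<bar>)"

lemma dl1_nonneg: "dl1 x y \<ge> 0" by (simp add: dl1_def sum_nonneg)
lemma dl1_sym: "dl1 x y = dl1 y x" by (simp add: dl1_def abs_minus_commute)
lemma dl1_tri: "dl1 x z \<le> dl1 x y + dl1 y z"
  unfolding dl1_def sum.distrib[symmetric] by (rule sum_mono) linarith
lemma dl1_diff: "dl1 (z - y) 0 = dl1 z y" by (simp add: dl1_def)
lemma dl1_neg: "dl1 (- h) 0 = dl1 h 0" by (simp add: dl1_def)
lemma dl1_scale: "dl1 (c *\<^sub>R x) (c *\<^sub>R y) = \<bar>c\<bar> * dl1 x y"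
  by (simp add: dl1_def sum_distrib_left abs_mult[symmetric] right_diff_distrib)
lemma dl1_scale2: "dl1 (c *\<^sub>R x) (r *\<^sub>R x) = \<bar>c - r\<bar> * dl1 x 0"
  by (simp add: dl1_def sum_distrib_left abs_mult[symmetric] left_diff_distrib)
lemma dl1_dist: fixes x y :: "real^'n" shows "dl1 x y \<le> real CARD('n) * dist x y"
proof -
  have "dl1 x y \<le> (\<Sum>i\<in>(UNIV::'n set). dist x y)" unfolding dl1_def
  proof (rule sum_mono)
    fix i show "\<bar>x $ i - y $ i\<bar> \<le> dist x y" using component_le_norm_cart[of "x-y" i] by (simp add: dist_norm)
  qed
  then show ?thesis by simp
qed

locale PPt = PLat F I mu for F :: "real set" and I :: "'i set" and mu :: "'i \<Rightarrow> 'i \<Rightarrow> real^'n \<Rightarrow> real^'n" +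
  fixes p a0
  assumes pSp: "p \<in> Sp F I mu" and a0: "a0 \<in> I"
begin

lemma p_F: "m \<in> Mel F I mu \<Longrightarrow> p m \<in> F" using pSp by (simp add: Sp_def)
lemma p_add: "m \<in> Mel F I mu \<Longrightarrow> m' \<in> Mel F I mu \<Longrightarrow> p m + p m' = Min ((\<lambda>a. p (padd I mu a m m')) ` I)"
  using pSp by (simp add: Sp_def)
lemma p_hom: "c \<in> F \<Longrightarrow> c \<ge> 0 \<Longrightarrow> m \<in> Mel F I mu \<Longrightarrow> p (psmul c m) = c * p m"
  using pSp by (simp add: Sp_def)

definition "f x = p (lift I mu a0 x)"
definition "D = {y. \<exists>N::nat. N > 0 \<and> real N *\<^sub>R y \<in> Fpts F}"
definition "g y = (let N = (SOME N::nat. N > 0 \<and> real N *\<^sub>R y \<in> Fpts F) in f (real N *\<^sub>R y) / real N)"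
definition "K = (\<Sum>i\<in>UNIV. \<bar>f (axis i 1)\<bar> + \<bar>f (- axis i 1)\<bar>)"
definition "G x = Inf ((\<lambda>y. g y + K * dl1 x y) ` D)"

lemma f_super: "x \<in> Fpts F \<Longrightarrow> y \<in> Fpts F \<Longrightarrow> f x + f y \<le> f (x + y)"
proof -
  assume xy: "x \<in> Fpts F" "y \<in> Fpts F"
  have "f x + f y = Min ((\<lambda>a. p (padd I mu a (lift I mu a0 x) (lift I mu a0 y))) ` I)"
    unfolding f_def by (rule p_add) (auto intro: lift_Mel a0 xy)
  also have "\<dots> \<le> p (padd I mu a0 (lift I mu a0 x) (lift I mu a0 y))"
    using finI a0 by (intro Min_le) auto
  also have "\<dots> = f (x + y)" by (simp add: f_def padd_lift a0)
  finally show ?thesis .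
qed

lemma f_hom: "c \<in> F \<Longrightarrow> c \<ge> 0 \<Longrightarrow> x \<in> Fpts F \<Longrightarrow> f (c *\<^sub>R x) = c * f x"
  unfolding f_def using p_hom[of c "lift I mu a0 x"] by (simp add: psmul_lift a0 lift_Mel)

lemma f_0: "f 0 = 0"
  using f_hom[of 0 0] F_0 Fpts_0 by simp

lemma f_nat: "x \<in> Fpts F \<Longrightarrow> f (real N *\<^sub>R x) = real N * f x"
  using f_hom F_nat by simp

lemma gN: assumes "N > 0" "real N *\<^sub>R y \<in> Fpts F" shows "g y = f (real N *\<^sub>R y) / real N"
proof -
  define M where "M = (SOME N::nat. N > 0 \<and> real N *\<^sub>R y \<in> Fpts F)"
  have M: "M > 0" "real M *\<^sub>R y \<in> Fpts F" using someI[of "\<lambda>N::nat. N > 0 \<and> real N *\<^sub>R y \<in> Fpts F", OF conjI[OF assms]]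
    unfolding M_def by auto
  have "f (real N *\<^sub>R (real M *\<^sub>R y)) = real N * f (real M *\<^sub>R y)" by (rule f_nat[OF M(2)])
  moreover have "f (real M *\<^sub>R (real N *\<^sub>R y)) = real M * f (real N *\<^sub>R y)" by (rule f_nat[OF assms(2)])
  moreover have "real N *\<^sub>R (real M *\<^sub>R y) = real M *\<^sub>R (real N *\<^sub>R y)" by (simp add: mult.commute)
  ultimately have "real N * f (real M *\<^sub>R y) = real M * f (real N *\<^sub>R y)" by metis
  then show ?thesis unfolding g_def M_def[symmetric] Let_def using M(1) assms(1)
    by (simp add: field_simps)
qed

lemma Fpts_D: "x \<in> Fpts F \<Longrightarrow> x \<in> D"
  unfolding D_def by (auto intro!: exI[of _ "1::nat"])

lemma g_Fpts: "x \<in> Fpts F \<Longrightarrow> g x = f x"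
  using gN[of 1 x] by simp

lemma D_common: assumes "y \<in> D" "z \<in> D"
  obtains N where "N > 0" "real N *\<^sub>R y \<in> Fpts F" "real N *\<^sub>R z \<in> Fpts F"
proof -
  obtain Ny Nz where y: "Ny > (0::nat)" "real Ny *\<^sub>R y \<in> Fpts F" and z: "Nz > (0::nat)" "real Nz *\<^sub>R z \<in> Fpts F"
    using assms unfolding D_def by blast
  have "real (Ny * Nz) *\<^sub>R y = real Nz *\<^sub>R (real Ny *\<^sub>R y)" by (simp add: mult.commute)
  then have 1: "real (Ny * Nz) *\<^sub>R y \<in> Fpts F" using Fpts_scale[OF F_nat y(2)] by metis
  have "real (Ny * Nz) *\<^sub>R z = real Ny *\<^sub>R (real Nz *\<^sub>R z)" by simp
  then have 2: "real (Ny * Nz) *\<^sub>R z \<in> Fpts F" using Fpts_scale[OF F_nat z(2)] by metis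
  show ?thesis by (rule that[OF _ 1 2]) (use y z in simp)
qed

lemma D_add: assumes "y \<in> D" "z \<in> D" shows "y + z \<in> D"
proof -
  obtain N where N: "N > 0" "real N *\<^sub>R y \<in> Fpts F" "real N *\<^sub>R z \<in> Fpts F" using D_common[OF assms] by blast
  have "real N *\<^sub>R (y + z) = real N *\<^sub>R y + real N *\<^sub>R z" by (rule scaleR_add_right)
  then have "real N *\<^sub>R (y + z) \<in> Fpts F" using Fpts_add[OF N(2,3)] by simp
  then show ?thesis unfolding D_def using N(1) by blast
qed

lemma D_neg: assumes "y \<in> D" shows "- y \<in> D"
proof -
  obtain N where N: "N > (0::nat)" "real N *\<^sub>R y \<in> Fpts F" using assms unfolding D_def by blast
  have "real N *\<^sub>R (- y) = - (real N *\<^sub>R y)" by (rule scaleR_minus_right)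
  then have "real N *\<^sub>R (- y) \<in> Fpts F" using Fpts_neg[OF N(2)] by simp
  then show ?thesis unfolding D_def using N(1) by blast
qed

lemma D_diff: "y \<in> D \<Longrightarrow> z \<in> D \<Longrightarrow> z - y \<in> D"
  using D_add[of z "- y"] D_neg[of y] by simp

lemma g_super: assumes "y \<in> D" "z \<in> D" shows "g y + g z \<le> g (y + z)"
proof -
  obtain N where N: "N > 0" "real N *\<^sub>R y \<in> Fpts F" "real N *\<^sub>R z \<in> Fpts F" using D_common assms by blast
  have yz: "real N *\<^sub>R (y + z) \<in> Fpts F" using N by (simp add: scaleR_add_right Fpts_add)
  show ?thesis using gN[OF N(1,2)] gN[OF N(1,3)] gN[OF N(1) yz] f_super[OF N(2,3)] N(1)
    by (simp add: scaleR_add_right divide_right_mono add_divide_distrib[symmetric])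
qed

lemma zero_D: "0 \<in> D" using Fpts_D Fpts_0 by blast
lemma g_0: "g 0 = 0" using g_Fpts[OF Fpts_0] f_0 by simp

lemma g_sum_super: "finite A \<Longrightarrow> (\<forall>i\<in>A. v i \<in> D) \<Longrightarrow> (\<Sum>i\<in>A. g (v i)) \<le> g (\<Sum>i\<in>A. v i) \<and> (\<Sum>i\<in>A. v i) \<in> D"
proof (induction A rule: finite_induct)
  case empty then show ?case using g_0 zero_D by simp
next
  case (insert x A)
  then have "g (v x) + g (\<Sum>i\<in>A. v i) \<le> g (v x + (\<Sum>i\<in>A. v i))" by (intro g_super) auto
  then show ?case using insert by (auto intro: D_add)
qed

lemma axis_term: assumes h: "h \<in> D"
  shows "g (h$i *\<^sub>R axis i 1) \<ge> - ((\<bar>f (axis i 1)\<bar> + \<bar>f (- axis i 1)\<bar>) * \<bar>h$i\<bar>)"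
    and "h$i *\<^sub>R axis i 1 \<in> D"
proof -
  obtain N where N: "N > (0::nat)" "real N *\<^sub>R h \<in> Fpts F" using h unfolding D_def by blast
  define c where "c = real N * h$i"
  have cF: "c \<in> F" using N(2) by (simp add: Fpts_def c_def)
  have NN: "real N *\<^sub>R (h$i *\<^sub>R axis i 1) = c *\<^sub>R axis i 1" by (simp add: c_def)
  have "real N *\<^sub>R (h$i *\<^sub>R axis i 1) \<in> Fpts F" unfolding NN by (rule Fpts_scale[OF cF Fpts_axis])
  then show "h$i *\<^sub>R axis i 1 \<in> D" unfolding D_def using N(1) by blast
  show "g (h$i *\<^sub>R axis i 1) \<ge> - ((\<bar>f (axis i 1)\<bar> + \<bar>f (- axis i 1)\<bar>) * \<bar>h$i\<bar>)"
  proof (cases "h$i \<ge> 0")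
    case True
    then have c0: "c \<ge> 0" by (simp add: c_def)
    have mem: "c *\<^sub>R axis i 1 \<in> Fpts F" by (rule Fpts_scale[OF cF Fpts_axis])
    have "g (h$i *\<^sub>R axis i 1) = f (real N *\<^sub>R (h$i *\<^sub>R axis i 1)) / real N"
      by (rule gN[OF N(1)]) (simp only: NN mem)
    also have "\<dots> = f (c *\<^sub>R axis i 1) / real N" by (simp only: NN)
    also have "\<dots> = c * f (axis i 1) / real N" by (simp only: f_hom[OF cF c0 Fpts_axis])
    also have "\<dots> = h$i * f (axis i 1)" using N(1) by (simp add: c_def)
    finally have e: "g (h$i *\<^sub>R axis i 1) = h$i * f (axis i 1)" .
    have e1: "\<bar>h$i * f (axis i 1)\<bar> = \<bar>f (axis i 1)\<bar> * \<bar>h$i\<bar>" by (simp add: abs_mult)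
    have e2: "\<bar>f (axis i 1)\<bar> * \<bar>h$i\<bar> \<le> (\<bar>f (axis i 1)\<bar> + \<bar>f (- axis i 1)\<bar>) * \<bar>h$i\<bar>"
      by (intro mult_right_mono) auto
    have "- \<bar>h$i * f (axis i 1)\<bar> \<le> h$i * f (axis i 1)" by (simp add: abs_if)
    then show ?thesis using e e1 e2 by linarith
  next
    case False
    then have c0: "-c \<ge> 0" by (simp add: c_def mult_nonneg_nonpos)
    have NN2: "real N *\<^sub>R (h$i *\<^sub>R axis i 1) = (-c) *\<^sub>R (- axis i 1)" by (simp add: c_def)
    have mem: "(-c) *\<^sub>R (- axis i 1) \<in> Fpts F" by (rule Fpts_scale[OF F_neg[OF cF] Fpts_neg[OF Fpts_axis]])
    have "g (h$i *\<^sub>R axis i 1) = f (real N *\<^sub>R (h$i *\<^sub>R axis i 1)) / real N"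
      by (rule gN[OF N(1)]) (simp only: NN2 mem)
    also have "\<dots> = f ((-c) *\<^sub>R (- axis i 1)) / real N" by (simp only: NN2)
    also have "\<dots> = (-c) * f (- axis i 1) / real N" by (simp only: f_hom[OF F_neg[OF cF] c0 Fpts_neg[OF Fpts_axis]])
    also have "\<dots> = - h$i * f (- axis i 1)" using N(1) by (simp add: c_def)
    finally have e: "g (h$i *\<^sub>R axis i 1) = - h$i * f (- axis i 1)" .
    have e1: "\<bar>- h$i * f (- axis i 1)\<bar> = \<bar>f (- axis i 1)\<bar> * \<bar>h$i\<bar>" by (simp add: abs_mult)
    have e2: "\<bar>f (- axis i 1)\<bar> * \<bar>h$i\<bar> \<le> (\<bar>f (axis i 1)\<bar> + \<bar>f (- axis i 1)\<bar>) * \<bar>h$i\<bar>"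
      by (intro mult_right_mono) auto
    have "- \<bar>- h$i * f (- axis i 1)\<bar> \<le> - h$i * f (- axis i 1)" by (simp add: abs_if)
    then show ?thesis using e e1 e2 by linarith
  qed
qed

lemma K_nonneg: "K \<ge> 0" unfolding K_def by (intro sum_nonneg) simp

lemma g_lower: assumes h: "h \<in> D" shows "g h \<ge> - K * dl1 h 0"
proof -
  have he: "h = (\<Sum>i\<in>UNIV. h$i *\<^sub>R axis i 1)"
    using basis_expansion[of h] by (simp add: scalar_mult_eq_scaleR)
  have "(\<Sum>i\<in>UNIV. g (h$i *\<^sub>R axis i 1)) \<le> g h"
    using g_sum_super[of UNIV "\<lambda>i. h$i *\<^sub>R axis i 1"] axis_term(2)[OF h] he by auto
  moreover have "(\<Sum>i\<in>UNIV. - (K * \<bar>h$i\<bar>)) \<le> (\<Sum>i\<in>UNIV. g (h$i *\<^sub>R axis i 1))"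
  proof (rule sum_mono)
    fix i :: 'n
    have "\<bar>f (axis i 1)\<bar> + \<bar>f (- axis i 1)\<bar> \<le> K" unfolding K_def
      by (rule member_le_sum[where f="\<lambda>i. \<bar>f (axis i 1)\<bar> + \<bar>f (- axis i 1)\<bar>"]) auto
    then have "(\<bar>f (axis i 1)\<bar> + \<bar>f (- axis i 1)\<bar>) * \<bar>h$i\<bar> \<le> K * \<bar>h$i\<bar>"
      by (simp add: mult_right_mono)
    then show "- (K * \<bar>h$i\<bar>) \<le> g (h$i *\<^sub>R axis i 1)" using axis_term(1)[OF h, of i] by linarith
  qed
  ultimately show ?thesis by (simp add: dl1_def sum_distrib_left sum_negf)
qed

lemma g_lip: assumes "y \<in> D" "z \<in> D" shows "g z \<ge> g y - K * dl1 z y"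
proof -
  have "g y + g (z - y) \<le> g (y + (z - y))" using g_super assms D_diff by blast
  moreover have "g (z - y) \<ge> - K * dl1 z y" using g_lower[OF D_diff[OF assms]] unfolding dl1_diff by simp
  ultimately show ?thesis by simp
qed

end



context PPt begin

lemma Kdl1_sym: fixes x y :: "real^'n" shows "K * dl1 x y = K * dl1 y x"
  using dl1_sym[of x y] by (rule arg_cong)

lemma g_lip2: assumes "y \<in> D" "z \<in> D" shows "\<bar>g y - g z\<bar> \<le> K * dl1 y z"
  unfolding abs_le_iff using g_lip[OF assms] g_lip[OF assms(2,1)] Kdl1_sym[of y z] by linarith

lemma G_bdd: fixes x :: "real^'n" shows "bdd_below ((\<lambda>y. g y + K * dl1 x y) ` D)"
proof (rule bdd_belowI2)
  fix y :: "real^'n" assume y: "y \<in> D"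
  have "K * dl1 y 0 \<le> K * dl1 y x + K * dl1 x 0"
    using mult_left_mono[OF dl1_tri[of y 0 x] K_nonneg] by (simp add: distrib_left)
  then show "- K * dl1 x 0 \<le> g y + K * dl1 x y"
    using g_lower[OF y] Kdl1_sym[of x y] by linarith
qed

lemma G_le: fixes x y :: "real^'n" shows "y \<in> D \<Longrightarrow> G x \<le> g y + K * dl1 x y"
  unfolding G_def by (rule cInf_lower) (auto intro: G_bdd)

lemma G_ge: fixes x :: "real^'n" shows "(\<And>y. y \<in> D \<Longrightarrow> c \<le> g y + K * dl1 x y) \<Longrightarrow> c \<le> G x"
  unfolding G_def using zero_D by (intro cInf_greatest) auto

lemma G_D: assumes "x \<in> D" shows "G x = g x"
proof (rule antisym)
  show "G x \<le> g x" using G_le[OF assms, of x] by (simp add: dl1_def)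
  show "g x \<le> G x"
  proof (rule G_ge)
    fix y :: "real^'n" assume y: "y \<in> D"
    show "g x \<le> g y + K * dl1 x y" using g_lip2[OF y assms] Kdl1_sym[of x y] unfolding abs_le_iff by linarith
  qed
qed

lemma G_0: "G 0 = 0" using G_D[OF zero_D] g_0 by simp

lemma G_lip: fixes x x' :: "real^'n" shows "G x \<le> G x' + K * dl1 x x'"
proof -
  have "G x - K * dl1 x x' \<le> G x'"
  proof (rule G_ge)
    fix y :: "real^'n" assume y: "y \<in> D"
    have "G x \<le> g y + K * dl1 x y" by (rule G_le[OF y])
    also have "\<dots> \<le> g y + K * (dl1 x x' + dl1 x' y)"
      using mult_left_mono[OF dl1_tri[of x y x'] K_nonneg] by simp
    finally show "G x - K * dl1 x x' \<le> g y + K * dl1 x' y" by (simp add: algebra_simps)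
  qed
  then show ?thesis by simp
qed

lemma G_lip2: fixes x x' :: "real^'n" shows "\<bar>G x - G x'\<bar> \<le> K * dl1 x x'"
  unfolding abs_le_iff using G_lip[of x x'] G_lip[of x' x] Kdl1_sym[of x x'] by linarith

lemma G_cont: "continuous_on UNIV G"
proof (rule lipschitz_on_continuous_on)
  show "(K * real CARD('n))-lipschitz_on UNIV G"
  proof (rule lipschitz_onI)
    fix x y :: "real^'n"
    have "dist (G x) (G y) \<le> K * dl1 x y" using G_lip2 by (simp add: dist_real_def)
    also have "\<dots> \<le> K * (real CARD('n) * dist x y)" by (rule mult_left_mono[OF dl1_dist K_nonneg])
    finally show "dist (G x) (G y) \<le> K * real CARD('n) * dist x y" by simp
  qed (use K_nonneg in simp)
qed

lemma D_rat: assumes "y \<in> D" "k > (0::nat)" "N > (0::nat)"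
  shows "(real k / real N) *\<^sub>R y \<in> D \<and> g ((real k / real N) *\<^sub>R y) = (real k / real N) * g y"
proof -
  obtain M where M: "M > (0::nat)" "real M *\<^sub>R y \<in> Fpts F" using assms(1) unfolding D_def by blast
  have e: "real (N * M) *\<^sub>R ((real k / real N) *\<^sub>R y) = real k *\<^sub>R (real M *\<^sub>R y)"
    using assms(3) by simp
  have kM: "real k *\<^sub>R (real M *\<^sub>R y) \<in> Fpts F" by (rule Fpts_scale[OF F_nat M(2)])
  have NM: "N * M > 0" using M assms by simp
  have "g ((real k / real N) *\<^sub>R y) = f (real (N * M) *\<^sub>R ((real k / real N) *\<^sub>R y)) / real (N * M)"
    by (rule gN[OF NM]) (simp only: e kM)
  also have "\<dots> = f (real k *\<^sub>R (real M *\<^sub>R y)) / real (N * M)" by (simp only: e)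
  also have "\<dots> = real k * f (real M *\<^sub>R y) / real (N * M)" using f_nat[OF M(2)] by simp
  also have "\<dots> = (real k / real N) * g y" using gN[OF M] M(1) by simp
  finally have "g ((real k / real N) *\<^sub>R y) = (real k / real N) * g y" .
  moreover have "real (N * M) *\<^sub>R ((real k / real N) *\<^sub>R y) \<in> Fpts F" unfolding e by (rule kM)
  then have "(real k / real N) *\<^sub>R y \<in> D" unfolding D_def using NM by blast
  ultimately show ?thesis by blast
qed

lemma G_scale_le: assumes r: "r > 0" and H: "\<And>y. y \<in> D \<Longrightarrow> r *\<^sub>R y \<in> D \<and> g (r *\<^sub>R y) = r * g y"
  shows "G (r *\<^sub>R x) \<le> r * G x"
proof -
  have "G (r *\<^sub>R x) / r \<le> G x"
  proof (rule G_ge)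
    fix y :: "real^'n" assume y: "y \<in> D"
    have "G (r *\<^sub>R x) \<le> g (r *\<^sub>R y) + K * dl1 (r *\<^sub>R x) (r *\<^sub>R y)" using G_le H[OF y] by blast
    also have "\<dots> = r * (g y + K * dl1 x y)" using H[OF y] r by (simp add: dl1_scale algebra_simps)
    finally show "G (r *\<^sub>R x) / r \<le> g y + K * dl1 x y" using r by (simp add: divide_le_eq mult.commute)
  qed
  then show ?thesis using r by (simp add: divide_le_eq mult.commute)
qed

lemma G_hom_rat: assumes "k > (0::nat)" "N > (0::nat)"
  shows "G ((real k / real N) *\<^sub>R x) = (real k / real N) * G x"
proof (rule antisym)
  have H1: "\<And>y. y \<in> D \<Longrightarrow> (real k / real N) *\<^sub>R y \<in> D \<and> g ((real k / real N) *\<^sub>R y) = (real k / real N) * g y"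
    using D_rat assms by blast
  have H2: "\<And>y. y \<in> D \<Longrightarrow> (real N / real k) *\<^sub>R y \<in> D \<and> g ((real N / real k) *\<^sub>R y) = (real N / real k) * g y"
    using D_rat assms by blast
  have p1: "real k / real N > 0" and p2: "real N / real k > 0" using assms by simp_all
  show "G ((real k / real N) *\<^sub>R x) \<le> (real k / real N) * G x"
    by (rule G_scale_le[OF p1 H1])
  have "G ((real N / real k) *\<^sub>R ((real k / real N) *\<^sub>R x)) \<le> (real N / real k) * G ((real k / real N) *\<^sub>R x)"
    by (rule G_scale_le[OF p2 H2])
  then have "G x \<le> (real N / real k) * G ((real k / real N) *\<^sub>R x)" using assms by simp
  then show "(real k / real N) * G x \<le> G ((real k / real N) *\<^sub>R x)"
    using assms by (simp add: field_simps)
qed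

lemma G_hom: assumes c: "c \<ge> 0" shows "G (c *\<^sub>R x) = c * G x"
proof (cases "c = 0")
  case True then show ?thesis using G_0 by simp
next
  case False
  then have c0: "c > 0" using c by simp
  define B where "B = K * dl1 x 0 + \<bar>G x\<bar>"
  have B: "B \<ge> 0" unfolding B_def by (intro add_nonneg_nonneg mult_nonneg_nonneg K_nonneg dl1_nonneg abs_ge_zero)
  have key: "\<bar>G (c *\<^sub>R x) - c * G x\<bar> \<le> d * B" if d: "d > 0" for d
  proof -
    obtain r where r: "r \<in> \<rat>" "c < r" "r < c + d" using Rats_dense_in_real[of c "c + d"] d by auto
    obtain k N :: nat where kN: "N \<noteq> 0" "\<bar>r\<bar> = real k / real N" using Rats_abs_nat_div_natE[OF r(1)] by blast
    have rk: "r = real k / real N" using kN r c0 by simp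
    have "k > 0" using rk r(2) c0 by (cases "k = 0") auto
    then have Gr: "G (r *\<^sub>R x) = r * G x" using rk kN G_hom_rat by simp
    have "\<bar>G (c *\<^sub>R x) - G (r *\<^sub>R x)\<bar> \<le> K * (\<bar>c - r\<bar> * dl1 x 0)" using G_lip2[of "c *\<^sub>R x" "r *\<^sub>R x"] by (simp only: dl1_scale2)
    moreover have "\<bar>r * G x - c * G x\<bar> = \<bar>c - r\<bar> * \<bar>G x\<bar>" by (simp add: abs_mult[symmetric] left_diff_distrib)
    ultimately have "\<bar>G (c *\<^sub>R x) - c * G x\<bar> \<le> \<bar>c - r\<bar> * B" unfolding B_def using Gr
      by (simp add: algebra_simps)
    also have "\<dots> \<le> d * B" using r B by (intro mult_right_mono) auto
    finally show ?thesis .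
  qed
  have "\<bar>G (c *\<^sub>R x) - c * G x\<bar> = 0"
  proof (rule ccontr)
    assume ne: "\<bar>G (c *\<^sub>R x) - c * G x\<bar> \<noteq> 0"
    define A where "A = \<bar>G (c *\<^sub>R x) - c * G x\<bar>"
    have A: "A > 0" using ne unfolding A_def by simp
    have "A \<le> (A / (B + 1)) * B" unfolding A_def using key[of "A / (B + 1)"] A B unfolding A_def by simp
    also have "\<dots> < A" using A B by (simp add: field_simps)
    finally show False by simp
  qed
  then show ?thesis by simp
qed

lemma D_dense: "\<exists>y\<in>D. dist y v < e" if e: "e > 0" for v :: "real^'n"
proof -
  obtain N :: nat where N: "real CARD('n) / e < real N" using reals_Archimedean2 by blast
  have N0: "N > 0" using N e by (cases "N = 0") (auto simp: divide_less_0_iff)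
  define y where "y = (\<chi> i. real_of_int \<lfloor>real N * v$i\<rfloor> / real N)"
  have Ny: "real N *\<^sub>R y = (\<chi> i. real_of_int \<lfloor>real N * v$i\<rfloor>)" using N0
    by (simp add: y_def vec_eq_iff)
  have "real N *\<^sub>R y \<in> Fpts F" unfolding Ny by (rule Fpts_int)
  then have yD: "y \<in> D" unfolding D_def using N0 by blast
  have "dist y v \<le> (\<Sum>i\<in>UNIV. \<bar>(y - v)$i\<bar>)" using norm_le_l1_cart[of "y - v"] by (simp add: dist_norm)
  also have "\<dots> \<le> (\<Sum>i\<in>(UNIV::'n set). 1 / real N)"
  proof (rule sum_mono)
    fix i
    have "real_of_int \<lfloor>real N * v$i\<rfloor> \<le> real N * v$i" "real N * v$i < real_of_int \<lfloor>real N * v$i\<rfloor> + 1"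
      by linarith+
    then have "\<bar>real_of_int \<lfloor>real N * v$i\<rfloor> - real N * v$i\<bar> \<le> 1" by linarith
    moreover have "real_of_int \<lfloor>real N * v$i\<rfloor> / real N - v$i = (real_of_int \<lfloor>real N * v$i\<rfloor> - real N * v$i) / real N"
      using N0 by (simp add: field_simps)
    ultimately have "\<bar>real_of_int \<lfloor>real N * v$i\<rfloor> / real N - v$i\<bar> \<le> 1 / real N" using N0
      by (simp add: abs_divide divide_right_mono)
    then show "\<bar>(y - v)$i\<bar> \<le> 1 / real N" by (simp add: y_def)
  qed
  also have "\<dots> = real CARD('n) / real N" by simp
  also have "\<dots> < e" using N N0 e by (simp add: divide_less_eq mult.commute pos_divide_less_eq)
  finally show ?thesis using yD by blast
qed

definition "q0 = restrict (\<lambda>m. G (m a0)) (MR I mu)"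

definition "Pq q \<longleftrightarrow> q \<in> extensional (MR I mu)
     \<and> (\<forall>m\<in>Mel F I mu. q m = p m)
     \<and> (\<forall>a\<in>I. continuous_on UNIV (\<lambda>v. q (lift I mu a v)))
     \<and> (\<forall>c\<ge>0. \<forall>m\<in>MR I mu. q (psmul c m) = c * q m)"

lemma p_lift: "m \<in> Mel F I mu \<Longrightarrow> p m = f (m a0)"
  unfolding f_def by (simp add: lift_self Mel_def a0)

lemma Pq0: "Pq q0"
  unfolding Pq_def
proof (intro conjI ballI allI impI)
  show "q0 \<in> extensional (MR I mu)" by (simp add: q0_def)
next
  fix m assume m: "m \<in> Mel F I mu"
  then have "m a0 \<in> Fpts F" "m \<in> MR I mu" using a0 by (auto simp: Mel_def)
  then show "q0 m = p m" using G_D[OF Fpts_D] g_Fpts p_lift[OF m] by (simp add: q0_def)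
next
  fix a assume a: "a \<in> I"
  have "q0 (lift I mu a v) = G (mu a a0 v)" for v by (simp add: q0_def lift_MR a lift_at a a0)
  then show "continuous_on UNIV (\<lambda>v. q0 (lift I mu a v))"
    using continuous_on_compose2[OF G_cont mu_cont[OF a a0]] by simp
next
  fix c :: real and m assume c: "0 \<le> c" and m: "m \<in> MR I mu"
  have mem: "psmul c m \<in> MR I mu" by (rule psmul_MR[OF m c])
  have "q0 (psmul c m) = G (psmul c m a0)" using mem by (simp add: q0_def)
  also have "\<dots> = G (c *\<^sub>R m a0)" by (simp add: psmul_def)
  also have "\<dots> = c * G (m a0)" by (rule G_hom[OF c])
  also have "\<dots> = c * q0 m" using m by (simp add: q0_def)
  finally show "q0 (psmul c m) = c * q0 m" .
qed

lemma Pq_unique: assumes "Pq q" shows "q = q0"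
proof
  fix m
  show "q m = q0 m"
  proof (cases "m \<in> MR I mu")
    case False then show ?thesis using assms by (simp add: Pq_def q0_def extensional_def)
  next
    case True
    define h where "h v = q (lift I mu a0 v)" for v
    have hc: "continuous_on UNIV h" using assms a0 unfolding Pq_def h_def by blast
    have hD: "h v = G v" if v: "v \<in> D" for v
    proof -
      obtain N where N: "N > (0::nat)" "real N *\<^sub>R v \<in> Fpts F" using v unfolding D_def by blast
      define x where "x = real N *\<^sub>R v"
      have "lift I mu a0 v = psmul (1 / real N) (lift I mu a0 x)" using N(1)
        by (simp add: psmul_lift a0 x_def)
      then have "h v = (1 / real N) * q (lift I mu a0 x)"
        using assms lift_MR[OF a0] unfolding Pq_def h_def by simp
      also have "q (lift I mu a0 x) = p (lift I mu a0 x)"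
        using assms lift_Mel[OF a0] N(2) unfolding Pq_def x_def by simp
      also have "\<dots> = f x" by (simp add: f_def)
      finally show ?thesis using G_D[OF v] gN[OF N] by (simp add: x_def)
    qed
    have cl: "closed {v. h v = G v}" by (rule closed_Collect_eq[OF hc G_cont])
    have "h (m a0) = G (m a0)"
      using closed_approachable[OF cl, of "m a0"] D_dense hD by fastforce
    then show ?thesis using True by (simp add: h_def lift_self a0 q0_def)
  qed
qed

lemma pext_eq: "m \<in> Mel F I mu \<Longrightarrow> pext F I mu p m = p m"
proof -
  assume m: "m \<in> Mel F I mu"
  have "pext F I mu p = (THE q. Pq q)" unfolding pext_def Pq_def by simp
  also have "\<dots> = q0" using Pq0 Pq_unique by (rule the_equality)
  finally show ?thesis using Pq0 m unfolding Pq_def by simp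
qed

end



context PLat begin

lemma pext_Sp: "p \<in> Sp F I mu \<Longrightarrow> m \<in> Mel F I mu \<Longrightarrow> pext F I mu p m = p m"
proof -
  assume "p \<in> Sp F I mu" "m \<in> Mel F I mu"
  obtain a0 where "a0 \<in> I" using I_ne by blast
  interpret PPt F I mu p a0 by unfold_locales fact+
  show ?thesis by (rule pext_eq) fact
qed

lemma Sp_F: "p \<in> Sp F I mu \<Longrightarrow> m \<in> Mel F I mu \<Longrightarrow> p m \<in> F" by (simp add: Sp_def)

lemma FinM_D: "S \<in> FinM F I mu \<Longrightarrow> finite S \<and> S \<noteq> {} \<and> S \<subseteq> Mel F I mu" by (simp add: FinM_def)

lemma Min_F: "p \<in> Sp F I mu \<Longrightarrow> S \<in> FinM F I mu \<Longrightarrow> Min (p ` S) \<in> F"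
proof -
  assume p: "p \<in> Sp F I mu" and S: "S \<in> FinM F I mu"
  have "Min (p ` S) \<in> p ` S" using FinM_D[OF S] by (intro Min_in) auto
  then obtain x where x: "x \<in> S" "Min (p ` S) = p x" by auto
  then show ?thesis using Sp_F[OF p] FinM_D[OF S] by auto
qed

lemma sub_H: assumes p: "p \<in> Sp F I mu" and S: "S \<in> FinM F I mu"
  shows "S \<subseteq> PL_halfspace F I mu p a \<longleftrightarrow> a \<le> Min (p ` S)"
proof -
  have S': "finite S" "S \<noteq> {}" "S \<subseteq> Mel F I mu" using FinM_D[OF S] by auto
  have "S \<subseteq> PL_halfspace F I mu p a \<longleftrightarrow> (\<forall>m\<in>S. a \<le> p m)"
  proof -
    have SM: "\<forall>m\<in>S. m \<in> MR I mu \<and> pext F I mu p m = p m"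
      using S'(3) pext_Sp[OF p] unfolding Mel_def by blast
    then show ?thesis unfolding PL_halfspace_def by auto
  qed
  also have "\<dots> \<longleftrightarrow> a \<le> Min (p ` S)" using S' by (simp add: Min_ge_iff)
  finally show ?thesis .
qed

lemma S_pconv: "S \<subseteq> MR I mu \<Longrightarrow> S \<subseteq> pconv F I mu S"
  unfolding pconv_def by auto

lemma pconv_H: "p \<in> Sp F I mu \<Longrightarrow> a \<in> F \<Longrightarrow> S \<subseteq> PL_halfspace F I mu p a \<Longrightarrow> pconv F I mu S \<subseteq> PL_halfspace F I mu p a"
  unfolding pconv_def by blast

lemma SMrel_char: "(S, S') \<in> SMrel F I mu \<longleftrightarrow>
   S \<in> FinM F I mu \<and> S' \<in> FinM F I mu \<and> (\<forall>p\<in>Sp F I mu. Min (p ` S) = Min (p ` S'))"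
proof (cases "S \<in> FinM F I mu \<and> S' \<in> FinM F I mu")
  case False then show ?thesis by (auto simp: SMrel_def)
next
  case True
  then have S: "S \<in> FinM F I mu" and S': "S' \<in> FinM F I mu" by auto
  have SM: "S \<subseteq> MR I mu" "S' \<subseteq> MR I mu" using FinM_D[OF S] FinM_D[OF S'] by (auto simp: Mel_def)
  have "pconv F I mu S = pconv F I mu S' \<longleftrightarrow> (\<forall>p\<in>Sp F I mu. Min (p ` S) = Min (p ` S'))"
  proof
    assume eq: "pconv F I mu S = pconv F I mu S'"
    have le: "Min (p ` T') \<le> Min (p ` T)"
      if p: "p \<in> Sp F I mu" and T: "T \<in> FinM F I mu" "T' \<in> FinM F I mu" "T \<subseteq> MR I mu"
        and e: "pconv F I mu T = pconv F I mu T'" for p T T'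
    proof -
      have "T' \<subseteq> PL_halfspace F I mu p (Min (p ` T'))" using sub_H[OF p T(2)] by simp
      then have "pconv F I mu T' \<subseteq> PL_halfspace F I mu p (Min (p ` T'))" using pconv_H[OF p Min_F[OF p T(2)]] by blast
      then have "T \<subseteq> PL_halfspace F I mu p (Min (p ` T'))" using S_pconv[OF T(3)] e by blast
      then show ?thesis using sub_H[OF p T(1)] by simp
    qed
    show "\<forall>p\<in>Sp F I mu. Min (p ` S) = Min (p ` S')"
      using le[OF _ S S' SM(1) eq] le[OF _ S' S SM(2) eq[symmetric]] by (auto intro: antisym)
  next
    assume H: "\<forall>p\<in>Sp F I mu. Min (p ` S) = Min (p ` S')"
    have "{PL_halfspace F I mu p a | p a. p \<in> Sp F I mu \<and> a \<in> F \<and> S \<subseteq> PL_halfspace F I mu p a}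
        = {PL_halfspace F I mu p a | p a. p \<in> Sp F I mu \<and> a \<in> F \<and> S' \<subseteq> PL_halfspace F I mu p a}"
    proof -
      have "\<forall>p a. (p \<in> Sp F I mu \<and> a \<in> F \<and> S \<subseteq> PL_halfspace F I mu p a) = (p \<in> Sp F I mu \<and> a \<in> F \<and> S' \<subseteq> PL_halfspace F I mu p a)"
      proof (intro allI)
        fix p a
        show "(p \<in> Sp F I mu \<and> a \<in> F \<and> S \<subseteq> PL_halfspace F I mu p a) = (p \<in> Sp F I mu \<and> a \<in> F \<and> S' \<subseteq> PL_halfspace F I mu p a)"
        proof (cases "p \<in> Sp F I mu")
          case True
          have e1: "S \<subseteq> PL_halfspace F I mu p a \<longleftrightarrow> a \<le> Min (p ` S)" by (rule sub_H[OF True S])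
          have e2: "S' \<subseteq> PL_halfspace F I mu p a \<longleftrightarrow> a \<le> Min (p ` S')" by (rule sub_H[OF True S'])
          have e3: "Min (p ` S) = Min (p ` S')" using H True by blast
          show ?thesis using e1 e2 e3 by simp
        qed simp
      qed
      then show ?thesis by simp
    qed
    then show "pconv F I mu S = pconv F I mu S'" unfolding pconv_def by simp
  qed
  then show ?thesis using True by (simp add: SMrel_def)
qed

abbreviation "R \<equiv> SMrel F I mu"

definition "vq S = (\<lambda>p. if p \<in> Sp F I mu then Min (p ` S) else 0)"

lemma vq_eq: "vq S = vq S' \<longleftrightarrow> (\<forall>p\<in>Sp F I mu. Min (p ` S) = Min (p ` S'))"
  unfolding vq_def fun_eq_iff by auto

lemma vq_at: "p \<in> Sp F I mu \<Longrightarrow> vq S p = Min (p ` S)" by (simp add: vq_def)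

lemma R_char: "(S, S') \<in> R \<longleftrightarrow> S \<in> FinM F I mu \<and> S' \<in> FinM F I mu \<and> vq S = vq S'"
  by (simp only: SMrel_char vq_eq)

lemma img_set: assumes Z0: "Z0 \<in> Z" and ZU: "\<And>U. U \<in> Z \<Longrightarrow> U \<in> FinM F I mu \<and> vq U = vq Z0"
  shows "R `` Z = R `` {Z0}"
proof (rule set_eqI)
  fix W
  show "W \<in> R `` Z \<longleftrightarrow> W \<in> R `` {Z0}"
  proof
    assume "W \<in> R `` Z"
    then obtain U where U: "U \<in> Z" "(U, W) \<in> R" by blast
    have "W \<in> FinM F I mu" "vq U = vq W" using U(2) unfolding R_char by blast+
    moreover have "Z0 \<in> FinM F I mu" "vq U = vq Z0" using ZU[OF U(1)] ZU[OF Z0] by blast+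
    ultimately have "(Z0, W) \<in> R" unfolding R_char by simp
    then show "W \<in> R `` {Z0}" by blast
  next
    assume "W \<in> R `` {Z0}"
    then have "(Z0, W) \<in> R" by blast
    then show "W \<in> R `` Z" using Z0 by blast
  qed
qed

lemma cls_mem: "S' \<in> R `` {S} \<Longrightarrow> S' \<in> FinM F I mu \<and> vq S' = vq S"
  unfolding Image_singleton_iff R_char by simp

lemma cls_refl: "S \<in> FinM F I mu \<Longrightarrow> S \<in> R `` {S}"
  unfolding Image_singleton_iff R_char by simp

lemma vq_Un: assumes S: "S \<in> FinM F I mu" and T: "T \<in> FinM F I mu"
  shows "vq (S \<union> T) = (\<lambda>p. min (vq S p) (vq T p))"
proof
  fix p show "vq (S \<union> T) p = min (vq S p) (vq T p)"
    using FinM_D[OF S] FinM_D[OF T] by (simp add: vq_def image_Un Min_Un)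
qed

lemma Un_FinM: "S \<in> FinM F I mu \<Longrightarrow> T \<in> FinM F I mu \<Longrightarrow> S \<union> T \<in> FinM F I mu"
  by (simp add: FinM_def)

lemma oplus_cls: assumes S: "S \<in> FinM F I mu" and T: "T \<in> FinM F I mu"
  shows "sm_oplus F I mu (smcls F I mu S) (smcls F I mu T) = smcls F I mu (S \<union> T)"
proof -
  have "R `` {S' \<union> T' |S' T'. S' \<in> R `` {S} \<and> T' \<in> R `` {T}} = R `` {S \<union> T}"
  proof (rule img_set)
    show "S \<union> T \<in> {S' \<union> T' |S' T'. S' \<in> R `` {S} \<and> T' \<in> R `` {T}}"
      using cls_refl[OF S] cls_refl[OF T] by blast
  next
    fix U assume "U \<in> {S' \<union> T' |S' T'. S' \<in> R `` {S} \<and> T' \<in> R `` {T}}"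
    then obtain S' T' where U: "U = S' \<union> T'" "S' \<in> R `` {S}" "T' \<in> R `` {T}" by blast
    have S': "S' \<in> FinM F I mu" "vq S' = vq S" and T': "T' \<in> FinM F I mu" "vq T' = vq T"
      using cls_mem[OF U(2)] cls_mem[OF U(3)] by blast+
    show "U \<in> FinM F I mu \<and> vq U = vq (S \<union> T)"
      unfolding U(1) using Un_FinM[OF S'(1) T'(1)] vq_Un[OF S'(1) T'(1)] vq_Un[OF S T] S'(2) T'(2) by simp
  qed
  then show ?thesis by (simp add: sm_oplus_def smcls_def)
qed

definition "Qs S T = {padd I mu a s t | s t a. s \<in> S \<and> t \<in> T \<and> a \<in> I}"

lemma Qs_img: "Qs S T = (\<lambda>(s, t, a). padd I mu a s t) ` (S \<times> T \<times> I)"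
  by (auto simp: Qs_def image_def)

lemma Qs_FinM: "S \<in> FinM F I mu \<Longrightarrow> T \<in> FinM F I mu \<Longrightarrow> Qs S T \<in> FinM F I mu"
  unfolding FinM_def Qs_img using finI I_ne by (auto intro!: padd_Mel)

lemma Qs_Min: assumes p: "p \<in> Sp F I mu" and S: "S \<in> FinM F I mu" and T: "T \<in> FinM F I mu"
  shows "Min (p ` Qs S T) = Min (p ` S) + Min (p ` T)"
proof (rule Min_eqI)
  show "finite (p ` Qs S T)" using Qs_FinM[OF S T] by (simp add: FinM_def)
  have S': "finite S" "S \<noteq> {}" "S \<subseteq> Mel F I mu" and T': "finite T" "T \<noteq> {}" "T \<subseteq> Mel F I mu"
    using FinM_D[OF S] FinM_D[OF T] by auto
  have padd_eq: "p s + p t = Min ((\<lambda>a. p (padd I mu a s t)) ` I)" if "s \<in> S" "t \<in> T" for s t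
  proof -
    have "s \<in> Mel F I mu" "t \<in> Mel F I mu" using that S'(3) T'(3) by blast+
    then show ?thesis using p unfolding Sp_def by blast
  qed
  show "Min (p ` S) + Min (p ` T) \<le> y" if "y \<in> p ` Qs S T" for y
  proof -
    obtain s t a where y: "s \<in> S" "t \<in> T" "a \<in> I" "y = p (padd I mu a s t)" using \<open>y \<in> p ` Qs S T\<close> by (auto simp: Qs_def)
    have "p s + p t \<le> y" using padd_eq[OF y(1,2)] finI y by simp
    moreover have "Min (p ` S) \<le> p s" "Min (p ` T) \<le> p t" using S' T' y by auto
    ultimately show ?thesis by linarith
  qed
  have "Min (p ` S) \<in> p ` S" using S'(1,2) by (intro Min_in) auto
  then obtain s0 where s0: "s0 \<in> S" "p s0 = Min (p ` S)" by (auto simp: image_iff)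
  have "Min (p ` T) \<in> p ` T" using T'(1,2) by (intro Min_in) auto
  then obtain t0 where t0: "t0 \<in> T" "p t0 = Min (p ` T)" by (auto simp: image_iff)
  have "Min ((\<lambda>a. p (padd I mu a s0 t0)) ` I) \<in> (\<lambda>a. p (padd I mu a s0 t0)) ` I"
    using finI I_ne by (intro Min_in) auto
  then obtain a1 where a1: "a1 \<in> I" "p (padd I mu a1 s0 t0) = Min ((\<lambda>a. p (padd I mu a s0 t0)) ` I)"
    by (auto simp: image_iff)
  have "padd I mu a1 s0 t0 \<in> Qs S T" using s0 t0 a1 by (auto simp: Qs_def)
  then show "Min (p ` S) + Min (p ` T) \<in> p ` Qs S T" using a1 padd_eq[OF s0(1) t0(1)] s0 t0 by force
qed

lemma vq_Qs: assumes S: "S \<in> FinM F I mu" and T: "T \<in> FinM F I mu"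
  shows "vq (Qs S T) = (\<lambda>p. vq S p + vq T p)"
proof
  fix p show "vq (Qs S T) p = vq S p + vq T p"
    by (cases "p \<in> Sp F I mu") (simp_all add: vq_def Qs_Min[OF _ S T])
qed

lemma star_cls: assumes S: "S \<in> FinM F I mu" and T: "T \<in> FinM F I mu"
  shows "sm_star F I mu (smcls F I mu S) (smcls F I mu T) = smcls F I mu (Qs S T)"
proof -
  have "R `` {Qs S' T' |S' T'. S' \<in> R `` {S} \<and> T' \<in> R `` {T}} = R `` {Qs S T}"
  proof (rule img_set)
    show "Qs S T \<in> {Qs S' T' |S' T'. S' \<in> R `` {S} \<and> T' \<in> R `` {T}}"
      using cls_refl[OF S] cls_refl[OF T] by blast
  next
    fix U assume "U \<in> {Qs S' T' |S' T'. S' \<in> R `` {S} \<and> T' \<in> R `` {T}}"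
    then obtain S' T' where U: "U = Qs S' T'" "S' \<in> R `` {S}" "T' \<in> R `` {T}" by blast
    have S': "S' \<in> FinM F I mu" "vq S' = vq S" and T': "T' \<in> FinM F I mu" "vq T' = vq T"
      using cls_mem[OF U(2)] cls_mem[OF U(3)] by blast+
    show "U \<in> FinM F I mu \<and> vq U = vq (Qs S T)"
      unfolding U(1) using Qs_FinM[OF S'(1) T'(1)] vq_Qs[OF S'(1) T'(1)] vq_Qs[OF S T] S'(2) T'(2) by simp
  qed
  then show ?thesis unfolding sm_star_def smcls_def Qs_def by simp
qed

lemma scale_FinM: "S \<in> FinM F I mu \<Longrightarrow> c \<in> F \<Longrightarrow> c \<ge> 0 \<Longrightarrow> psmul c ` S \<in> FinM F I mu"
  unfolding FinM_def using psmul_Mel by blast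

lemma scale_Min: assumes p: "p \<in> Sp F I mu" and S: "S \<in> FinM F I mu" and c: "c \<in> F" "c \<ge> 0"
  shows "Min (p ` psmul c ` S) = c * Min (p ` S)"
proof -
  have S': "finite S" "S \<noteq> {}" "S \<subseteq> Mel F I mu" using FinM_D[OF S] by auto
  have ph: "p (psmul c m) = c * p m" if "m \<in> S" for m using p S'(3) c that unfolding Sp_def by blast
  have "p ` psmul c ` S = (\<lambda>x. c * x) ` p ` S" unfolding image_image using ph by (rule image_cong[OF refl])
  moreover have "mono (\<lambda>x. c * x)" using c by (simp add: mono_def mult_left_mono)
  ultimately show ?thesis using mono_Min_commute[of "\<lambda>x. c * x" "p ` S"] S' by simp
qed

lemma vq_scale: assumes S: "S \<in> FinM F I mu" and c: "c \<in> F" "c \<ge> 0"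
  shows "vq (psmul c ` S) = (\<lambda>p. c * vq S p)"
proof
  fix p show "vq (psmul c ` S) p = c * vq S p"
    by (cases "p \<in> Sp F I mu") (simp_all add: vq_def scale_Min[OF _ S c])
qed

lemma scale_cls: assumes S: "S \<in> FinM F I mu" and c: "c \<in> F" "c \<ge> 0"
  shows "sm_scale F I mu c (smcls F I mu S) = smcls F I mu (psmul c ` S)"
proof -
  have "R `` {psmul c ` S' |S'. S' \<in> R `` {S}} = R `` {psmul c ` S}"
  proof (rule img_set)
    show "psmul c ` S \<in> {psmul c ` S' |S'. S' \<in> R `` {S}}" using cls_refl[OF S] by blast
  next
    fix U assume "U \<in> {psmul c ` S' |S'. S' \<in> R `` {S}}"
    then obtain S' where U: "U = psmul c ` S'" "S' \<in> R `` {S}" by blast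
    have S': "S' \<in> FinM F I mu" "vq S' = vq S" using cls_mem[OF U(2)] by blast+
    show "U \<in> FinM F I mu \<and> vq U = vq (psmul c ` S)"
      unfolding U(1) using scale_FinM[OF S'(1) c] vq_scale[OF S'(1) c] vq_scale[OF S c] S'(2) by simp
  qed
  then show ?thesis by (simp add: sm_scale_def smcls_def)
qed

lemma smcls_SM: "S \<in> FinM F I mu \<Longrightarrow> smcls F I mu S \<in> SM F I mu"
  by (simp add: SM_def smcls_def quotientI)

lemma SM_cases: "x \<in> SM F I mu \<Longrightarrow> x = None \<or> (\<exists>S\<in>FinM F I mu. x = smcls F I mu S)"
  by (auto simp: SM_def smcls_def elim!: quotientE)

lemma single_FinM: "m \<in> Mel F I mu \<Longrightarrow> {m} \<in> FinM F I mu" by (simp add: FinM_def)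

end



context PLat begin

lemma SMor_D: assumes "pt \<in> SMor F I mu"
  shows "pt \<in> extensional (SM F I mu)"
    "\<And>x. x \<in> SM F I mu \<Longrightarrow> pt x \<in> ereal ` F \<union> {\<infinity>}"
    "\<And>x y. x \<in> SM F I mu \<Longrightarrow> y \<in> SM F I mu \<Longrightarrow> pt (sm_oplus F I mu x y) = min (pt x) (pt y)"
    "\<And>x y. x \<in> SM F I mu \<Longrightarrow> y \<in> SM F I mu \<Longrightarrow> pt (sm_star F I mu x y) = pt x + pt y"
    "pt None = \<infinity>"
    "\<And>c x. c \<in> F \<Longrightarrow> c \<ge> 0 \<Longrightarrow> x \<in> SM F I mu \<Longrightarrow> pt (sm_scale F I mu c x) = tscale c (pt x)"
    "\<And>x. x \<in> SM F I mu \<Longrightarrow> x \<noteq> None \<Longrightarrow> pt x \<noteq> \<infinity>"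
  using assms unfolding SMor_def by auto

lemma smcls_ne: "smcls F I mu S \<noteq> None" by (simp add: smcls_def)

lemma SMor_single: assumes pt: "pt \<in> SMor F I mu" and m: "m \<in> Mel F I mu"
  shows "pt (smcls F I mu {m}) = ereal (restrM F I mu pt m) \<and> restrM F I mu pt m \<in> F"
proof -
  have x: "smcls F I mu {m} \<in> SM F I mu" by (rule smcls_SM[OF single_FinM[OF m]])
  have "pt (smcls F I mu {m}) \<in> ereal ` F" using SMor_D(2)[OF pt x] SMor_D(7)[OF pt x smcls_ne] by auto
  then show ?thesis using m by (auto simp: restrM_def)
qed

lemma SMor_cls: assumes pt: "pt \<in> SMor F I mu" and S: "S \<in> FinM F I mu"
  shows "pt (smcls F I mu S) = ereal (Min (restrM F I mu pt ` S))"
proof -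
  have "finite S" "S \<noteq> {}" "S \<subseteq> Mel F I mu" using FinM_D[OF S] by auto
  then show ?thesis
  proof (induction S rule: finite_ne_induct)
    case (singleton x) then show ?case using SMor_single[OF pt] by simp
  next
    case (insert x S)
    have FS: "S \<in> FinM F I mu" using insert by (simp add: FinM_def)
    have Fx: "{x} \<in> FinM F I mu" using insert by (simp add: FinM_def)
    have "smcls F I mu (insert x S) = sm_oplus F I mu (smcls F I mu {x}) (smcls F I mu S)"
      using oplus_cls[OF Fx FS] by simp
    then have "pt (smcls F I mu (insert x S)) = min (pt (smcls F I mu {x})) (pt (smcls F I mu S))"
      using SMor_D(3)[OF pt smcls_SM[OF Fx] smcls_SM[OF FS]] by simp
    then show ?case using insert SMor_single[OF pt, of x] by simp
  qed
qed

lemma restr_Sp: assumes pt: "pt \<in> SMor F I mu" shows "restrM F I mu pt \<in> Sp F I mu"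
proof -
  let ?p = "restrM F I mu pt"
  have add: "?p m + ?p m' = Min ((\<lambda>a. ?p (padd I mu a m m')) ` I)"
    if m: "m \<in> Mel F I mu" "m' \<in> Mel F I mu" for m m'
  proof -
    have Q: "Qs {m} {m'} = (\<lambda>a. padd I mu a m m') ` I" by (auto simp: Qs_def)
    have "pt (sm_star F I mu (smcls F I mu {m}) (smcls F I mu {m'})) = pt (smcls F I mu {m}) + pt (smcls F I mu {m'})"
      using SMor_D(4)[OF pt smcls_SM[OF single_FinM[OF m(1)]] smcls_SM[OF single_FinM[OF m(2)]]] .
    then have "ereal (Min (?p ` Qs {m} {m'})) = ereal (?p m) + ereal (?p m')"
      using star_cls[OF single_FinM[OF m(1)] single_FinM[OF m(2)]]
        SMor_cls[OF pt Qs_FinM[OF single_FinM[OF m(1)] single_FinM[OF m(2)]]]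
        SMor_single[OF pt m(1)] SMor_single[OF pt m(2)] by simp
    then show ?thesis unfolding Q image_image by simp
  qed
  have hom: "?p (psmul c m) = c * ?p m" if c: "c \<in> F" "c \<ge> 0" and m: "m \<in> Mel F I mu" for c m
  proof -
    have "pt (sm_scale F I mu c (smcls F I mu {m})) = tscale c (pt (smcls F I mu {m}))"
      using SMor_D(6)[OF pt c smcls_SM[OF single_FinM[OF m]]] .
    then have "ereal (?p (psmul c m)) = tscale c (ereal (?p m))"
      using scale_cls[OF single_FinM[OF m] c] SMor_single[OF pt m] SMor_single[OF pt psmul_Mel[OF m c(2,1)]] by simp
    then show ?thesis by (cases "c = 0") (simp_all add: tscale_def zero_ereal_def)
  qed
  show ?thesis unfolding Sp_def mem_Collect_eq
  proof (intro conjI ballI allI impI)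
    show "?p \<in> extensional (Mel F I mu)" by (simp add: restrM_def)
  next
    fix m assume "m \<in> Mel F I mu"
    then show "?p m \<in> F" using SMor_single[OF pt] by blast
  next
    fix m m' assume "m \<in> Mel F I mu" "m' \<in> Mel F I mu"
    then show "?p m + ?p m' = Min ((\<lambda>a. ?p (padd I mu a m m')) ` I)" by (rule add)
  next
    fix c m assume "c \<in> F" "0 \<le> c" "m \<in> Mel F I mu"
    then show "?p (psmul c m) = c * ?p m" by (rule hom)
  qed
qed

lemma SMor_inj: "inj_on (restrM F I mu) (SMor F I mu)"
proof (rule inj_onI)
  fix pt1 pt2 assume p1: "pt1 \<in> SMor F I mu" and p2: "pt2 \<in> SMor F I mu" and eq: "restrM F I mu pt1 = restrM F I mu pt2"
  show "pt1 = pt2"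
  proof
    fix x show "pt1 x = pt2 x"
    proof (cases "x \<in> SM F I mu")
      case False then show ?thesis using SMor_D(1)[OF p1] SMor_D(1)[OF p2] by (simp add: extensional_def)
    next
      case True
      then show ?thesis using SM_cases[OF True] SMor_D(5)[OF p1] SMor_D(5)[OF p2] SMor_cls[OF p1] SMor_cls[OF p2] eq
        by auto
    qed
  qed
qed

lemma oplus_None1: "sm_oplus F I mu None y = y" by (simp add: sm_oplus_def)
lemma oplus_None2: "sm_oplus F I mu x None = x" by (cases x) (simp_all add: sm_oplus_def)
lemma star_None1: "sm_star F I mu None y = None" by (simp add: sm_star_def)
lemma star_None2: "sm_star F I mu x None = None" by (cases x) (simp_all add: sm_star_def)

definition "ptof p = restrict (\<lambda>x. case x of None \<Rightarrow> \<infinity> | Some X \<Rightarrow> ereal (Min (p ` (SOME S. S \<in> X)))) (SM F I mu)"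

lemma ptof_None: "ptof p None = \<infinity>" by (simp add: ptof_def SM_def)

lemma ptof_cls: assumes p: "p \<in> Sp F I mu" and S: "S \<in> FinM F I mu"
  shows "ptof p (smcls F I mu S) = ereal (Min (p ` S))"
proof -
  have "S \<in> R `` {S}" by (rule cls_refl[OF S])
  then have "(SOME S'. S' \<in> R `` {S}) \<in> R `` {S}" by (rule someI)
  then have "vq (SOME S'. S' \<in> R `` {S}) = vq S" using cls_mem by blast
  then have "vq (SOME S'. S' \<in> R `` {S}) p = vq S p" by (rule fun_cong)
  then have e: "Min (p ` (SOME S'. S' \<in> R `` {S})) = Min (p ` S)" by (simp only: vq_at[OF p])
  have "ptof p (smcls F I mu S) = ereal (Min (p ` (SOME S'. S' \<in> R `` {S})))"
    using smcls_SM[OF S] unfolding ptof_def smcls_def by simp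
  then show ?thesis by (simp only: e)
qed

lemma ptof_SMor: assumes p: "p \<in> Sp F I mu" shows "ptof p \<in> SMor F I mu"
proof -
  let ?pt = "ptof p"
  note ptN = ptof_None[of p]
  note ptc = ptof_cls[OF p]
  have pF: "Min (p ` S) \<in> F" if "S \<in> FinM F I mu" for S using Min_F[OF p that] .
  have hh: "\<forall>c\<in>F. c \<ge> 0 \<longrightarrow> (\<forall>m\<in>Mel F I mu. p (psmul c m) = c * p m)" using p unfolding Sp_def by blast
  have "p (psmul 0 (zeroM I)) = 0 * p (zeroM I)" using hh F_0 zeroM_Mel by blast
  then have z: "p (zeroM I) = 0" by (simp add: psmul_0)
  have z2: "?pt (smcls F I mu {zeroM I}) = 0"
    using ptc[OF single_FinM[OF zeroM_Mel]] z by (simp add: zero_ereal_def)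
  have vals: "?pt x \<in> ereal ` F \<union> {\<infinity>}" if x: "x \<in> SM F I mu" for x
    using SM_cases[OF x]
  proof (elim disjE bexE)
    assume "x = None" then show ?thesis using ptN by simp
  next
    fix S assume "S \<in> FinM F I mu" "x = smcls F I mu S"
    then show ?thesis using ptc pF by simp
  qed
  have fin: "?pt x \<noteq> \<infinity>" if x: "x \<in> SM F I mu" "x \<noteq> None" for x
    using SM_cases[OF x(1)]
  proof (elim disjE bexE)
    assume "x = None" then show ?thesis using x(2) by simp
  next
    fix S assume "S \<in> FinM F I mu" "x = smcls F I mu S"
    then show ?thesis using ptc by simp
  qed
  have opl: "?pt (sm_oplus F I mu x y) = min (?pt x) (?pt y)" if x: "x \<in> SM F I mu" and y: "y \<in> SM F I mu" for x y
    using SM_cases[OF x]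
  proof (elim disjE bexE)
    assume "x = None" then show ?thesis using ptN by (simp add: oplus_None1)
  next
    fix S assume S: "S \<in> FinM F I mu" "x = smcls F I mu S"
    show ?thesis using SM_cases[OF y]
    proof (elim disjE bexE)
      assume "y = None" then show ?thesis using ptN by (simp add: oplus_None2)
    next
      fix T assume T: "T \<in> FinM F I mu" "y = smcls F I mu T"
      have "?pt (sm_oplus F I mu x y) = ereal (Min (p ` (S \<union> T)))"
        using oplus_cls[OF S(1) T(1)] ptc[OF Un_FinM[OF S(1) T(1)]] S(2) T(2) by simp
      also have "Min (p ` (S \<union> T)) = min (Min (p ` S)) (Min (p ` T))"
        using FinM_D[OF S(1)] FinM_D[OF T(1)] by (simp add: image_Un Min_Un)
      finally show ?thesis using ptc[OF S(1)] ptc[OF T(1)] S(2) T(2) by simp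
    qed
  qed
  have str: "?pt (sm_star F I mu x y) = ?pt x + ?pt y" if x: "x \<in> SM F I mu" and y: "y \<in> SM F I mu" for x y
  proof -
    have yv: "?pt y \<noteq> - \<infinity>" using vals[OF y] by auto
    have xv: "?pt x \<noteq> - \<infinity>" using vals[OF x] by auto
    show ?thesis using SM_cases[OF x]
    proof (elim disjE bexE)
      assume "x = None" then show ?thesis using ptN yv by (simp add: star_None1)
    next
      fix S assume S: "S \<in> FinM F I mu" "x = smcls F I mu S"
      show ?thesis using SM_cases[OF y]
      proof (elim disjE bexE)
        assume "y = None" then show ?thesis using ptN xv by (simp add: star_None2)
      next
        fix T assume T: "T \<in> FinM F I mu" "y = smcls F I mu T"
        have "?pt (sm_star F I mu x y) = ereal (Min (p ` Qs S T))"
          using star_cls[OF S(1) T(1)] ptc[OF Qs_FinM[OF S(1) T(1)]] S(2) T(2) by simp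
        then show ?thesis using Qs_Min[OF p S(1) T(1)] ptc[OF S(1)] ptc[OF T(1)] S(2) T(2) by simp
      qed
    qed
  qed
  have scl: "?pt (sm_scale F I mu c x) = tscale c (?pt x)" if c: "c \<in> F" "0 \<le> c" and x: "x \<in> SM F I mu" for c x
    using SM_cases[OF x]
  proof (elim disjE bexE)
    assume xN: "x = None"
    show ?thesis
    proof (cases "c = 0")
      case True then show ?thesis using xN z2 by (simp add: sm_scale_def tscale_def)
    next
      case False then have "c > 0" using c by simp
      then show ?thesis using xN ptN by (simp add: sm_scale_def tscale_def)
    qed
  next
    fix S assume S: "S \<in> FinM F I mu" "x = smcls F I mu S"
    have "?pt (sm_scale F I mu c x) = ereal (Min (p ` psmul c ` S))"
      using scale_cls[OF S(1) c] ptc[OF scale_FinM[OF S(1) c]] S(2) by simp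
    also have "\<dots> = ereal (c * Min (p ` S))" by (simp only: scale_Min[OF p S(1) c])
    finally show ?thesis using ptc[OF S(1)] S(2) by (cases "c = 0") (simp_all add: tscale_def zero_ereal_def)
  qed
  show ?thesis unfolding SMor_def mem_Collect_eq
  proof (intro conjI ballI allI impI)
    show "?pt \<in> extensional (SM F I mu)" by (simp add: ptof_def)
    show "?pt None = \<infinity>" by (rule ptN)
    show "?pt (smcls F I mu {zeroM I}) = 0" by (rule z2)
  next
    fix x assume "x \<in> SM F I mu" then show "?pt x \<in> ereal ` F \<union> {\<infinity>}" by (rule vals)
  next
    fix x assume "x \<in> SM F I mu - {None}" then show "?pt x \<noteq> \<infinity>" using fin by blast
  next
    fix x y assume "x \<in> SM F I mu" "y \<in> SM F I mu"
    then show "?pt (sm_oplus F I mu x y) = min (?pt x) (?pt y)" by (rule opl)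
  next
    fix x y assume "x \<in> SM F I mu" "y \<in> SM F I mu"
    then show "?pt (sm_star F I mu x y) = ?pt x + ?pt y" by (rule str)
  next
    fix c x assume "c \<in> F" "0 \<le> c" "x \<in> SM F I mu"
    then show "?pt (sm_scale F I mu c x) = tscale c (?pt x)" by (rule scl)
  qed
qed

lemma SMor_surj: assumes p: "p \<in> Sp F I mu" shows "p \<in> restrM F I mu ` SMor F I mu"
proof -
  have "restrM F I mu (ptof p) = p"
  proof
    fix m show "restrM F I mu (ptof p) m = p m"
    proof (cases "m \<in> Mel F I mu")
      case True then show ?thesis using ptof_cls[OF p single_FinM[OF True]] by (simp add: restrM_def)
    next
      case False
      have "p \<in> extensional (Mel F I mu)" using p by (simp add: Sp_def)
      then show ?thesis using False by (simp add: restrM_def extensional_def)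
    qed
  qed
  then show ?thesis using ptof_SMor[OF p] by (metis image_eqI)
qed

lemma main: "bij_betw (restrM F I mu) (SMor F I mu) (Sp F I mu)
    \<and> (\<forall>pt\<in>SMor F I mu.
          pt None = \<infinity>
        \<and> (\<forall>S\<in>FinM F I mu. pt (smcls F I mu S) = ereal (Min (restrM F I mu pt ` S))))"
  unfolding bij_betw_def using SMor_inj SMor_surj restr_Sp SMor_D(5) SMor_cls by blast

end

theorem mainTheorem7:
  fixes F :: "real set" and I :: "'i set" and mu :: "'i \<Rightarrow> 'i \<Rightarrow> real^'n \<Rightarrow> real^'n"
  assumes "subring_of_reals F"
    and "polyptych_lattice F I mu"
    and "finite I"
  shows "bij_betw (restrM F I mu) (SMor F I mu) (Sp F I mu)
    \<and> (\<forall>pt\<in>SMor F I mu.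
          pt None = \<infinity>
        \<and> (\<forall>S\<in>FinM F I mu. pt (smcls F I mu S) = ereal (Min (restrM F I mu pt ` S))))"
proof -
  interpret PLat F I mu using assms by unfold_locales
  show ?thesis by (rule main)
qed


end
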